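(* For every positive integer $L$, $$\{(\mathbf{X},\mathbf{Y}) \in \mathbb{S}^L_{+}\times\mathbb{S}^L : -\mathbf{X}\preceq\mathbf{Y}\preceq\mathbf{X}\} = \operatorname{cl}\{(\mathbf{X},\mathbf{Y})\in\mathbb{S}^L_{++}\times\mathbb{S}^L : \mathbf{X}-\mathbf{Y}\mathbf{X}^{-1}\mathbf{Y}\succ 0\}.$$
   Context: $\mathbb{S}^L$, $\mathbb{S}^L_+$, $\mathbb{S}^L_{++}$ denote the real symmetric, positive semidefinite and positive definite $L\times L$ matrices; $\preceq$ and $\succ$ refer to the Loewner order; $\operatorname{cl}$ denotes closure. *)

theory Defs
  imports "HOL-Analysis.Analysis"
begin

text \<open>Real symmetric L x L matrices, with L = CARD('n).\<close>
definition symmetric_mat :: "real^'n^'n \<Rightarrow> bool" where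
  "symmetric_mat A \<longleftrightarrow> transpose A = A"

definition psd :: "real^'n^'n \<Rightarrow> bool" where
  "psd A \<longleftrightarrow> symmetric_mat A \<and> (\<forall>x. 0 \<le> x \<bullet> (A *v x))"

definition pd :: "real^'n^'n \<Rightarrow> bool" where
  "pd A \<longleftrightarrow> symmetric_mat A \<and> (\<forall>x. x \<noteq> 0 \<longrightarrow> 0 < x \<bullet> (A *v x))"

definition loewner_le :: "real^'n^'n \<Rightarrow> real^'n^'n \<Rightarrow> bool" where
  "loewner_le A B \<longleftrightarrow> psd (B - A)"

end

theory Submission
  imports Defs
begin

lemma transpose_add': "transpose (A + B) = transpose A + transpose (B::real^'n^'n)"
  by (simp add: transpose_def vec_eq_iff)
lemma transpose_diff': "transpose (A - B) = transpose A - transpose (B::real^'n^'n)"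
  by (simp add: transpose_def vec_eq_iff)
lemma transpose_uminus': "transpose (- A) = - transpose (A::real^'n^'n)"
  by (simp add: transpose_def vec_eq_iff)

lemma sym_swap:
  assumes "symmetric_mat (A::real^'n^'n)"
  shows "u \<bullet> (A *v v) = v \<bullet> (A *v u)"
proof -
  have "u \<bullet> (A *v v) = (u v* A) \<bullet> v" by (simp add: dot_lmul_matrix)
  also have "u v* A = transpose A *v u" by simp
  also have "\<dots> = A *v u" using assms by (simp add: symmetric_mat_def)
  finally show ?thesis by (simp add: inner_commute)
qed

lemma pd_invertible:
  assumes "pd (X::real^'n^'n)" shows "invertible X"
proof -
  have "\<forall>x. X *v x = 0 \<longrightarrow> x = 0"
    using assms unfolding pd_def by (metis inner_zero_right less_irrefl)
  then show ?thesis using matrix_left_invertible_ker invertible_left_inverse by blast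
qed

lemma matrix_inv_props:
  assumes "invertible (X::real^'n^'n)"
  shows "X ** matrix_inv X = mat 1" "matrix_inv X ** X = mat 1"
proof -
  have "\<exists>A'. X ** A' = mat 1 \<and> A' ** X = mat 1" using assms invertible_def by blast
  then have "X ** matrix_inv X = mat 1 \<and> matrix_inv X ** X = mat 1"
    unfolding matrix_inv_def by (rule someI_ex)
  then show "X ** matrix_inv X = mat 1" "matrix_inv X ** X = mat 1" by auto
qed

lemma inv_sym:
  assumes "symmetric_mat (X::real^'n^'n)" "invertible X"
  shows "symmetric_mat (matrix_inv X)"
proof -
  let ?Xi = "matrix_inv X"
  have "transpose ?Xi ** X = mat 1"
    using matrix_transpose_mul[of X ?Xi] matrix_inv_props(1)[OF assms(2)] assms(1)
    by (metis symmetric_mat_def transpose_mat)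
  then have "transpose ?Xi = transpose ?Xi ** (X ** ?Xi)"
    using matrix_inv_props(1)[OF assms(2)] by (simp add: matrix_mul_rid)
  also have "\<dots> = ?Xi" using \<open>transpose ?Xi ** X = mat 1\<close>
    by (simp add: matrix_mul_assoc matrix_mul_lid)
  finally show ?thesis by (simp add: symmetric_mat_def)
qed

lemma key:
  fixes x :: "real^'n"
  assumes "pd (X::real^'n^'n)" "symmetric_mat Y"
  defines "w \<equiv> matrix_inv X *v (Y *v x)"
  shows "X *v w = Y *v x" "x \<bullet> ((Y ** matrix_inv X ** Y) *v x) = w \<bullet> (X *v w)"
proof -
  have inv: "invertible X" using pd_invertible assms(1) by blast
  have e: "X ** (matrix_inv X ** Y) = Y"
    by (metis matrix_mul_assoc matrix_inv_props(1)[OF inv] matrix_mul_lid)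
  show 1: "X *v w = Y *v x" unfolding w_def
    by (simp add: matrix_vector_mul_assoc e)
  have "x \<bullet> ((Y ** matrix_inv X ** Y) *v x) = x \<bullet> (Y *v w)"
    unfolding w_def by (simp add: matrix_vector_mul_assoc matrix_mul_assoc)
  also have "\<dots> = w \<bullet> (Y *v x)" using sym_swap[OF assms(2)] by blast
  finally show "x \<bullet> ((Y ** matrix_inv X ** Y) *v x) = w \<bullet> (X *v w)" using 1 by simp
qed

lemma sym_schur:
  assumes "symmetric_mat (X::real^'n^'n)" "symmetric_mat Y" "invertible X"
  shows "symmetric_mat (X - Y ** matrix_inv X ** Y)"
  using assms inv_sym[OF assms(1,3)]
  by (simp add: symmetric_mat_def transpose_diff' matrix_transpose_mul matrix_mul_assoc)

lemma quad_add:
  assumes "symmetric_mat (A::real^'n^'n)"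
  shows "(u + v) \<bullet> (A *v (u + v)) = u \<bullet> (A *v u) + 2 * (u \<bullet> (A *v v)) + v \<bullet> (A *v v)"
  using sym_swap[OF assms, of v u]
  by (simp add: matrix_vector_right_distrib inner_add_left inner_add_right)

lemma quad_diff:
  assumes "symmetric_mat (A::real^'n^'n)"
  shows "(u - v) \<bullet> (A *v (u - v)) = u \<bullet> (A *v u) - 2 * (u \<bullet> (A *v v)) + v \<bullet> (A *v v)"
  using sym_swap[OF assms, of v u]
  by (simp add: matrix_vector_mult_diff_distrib inner_diff_left inner_diff_right)

lemma forward:
  assumes X: "pd (X::real^'n^'n)" and Y: "symmetric_mat Y"
    and S: "pd (X - Y ** matrix_inv X ** Y)"
  shows "psd X \<and> symmetric_mat Y \<and> loewner_le (- X) Y \<and> loewner_le Y X"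
proof -
  have sX: "symmetric_mat X" using X pd_def by blast
  have psdX: "psd X" using X unfolding pd_def psd_def by (metis inner_zero_left order_refl order_less_imp_le)
  have ineq: "\<bar>x \<bullet> (Y *v x)\<bar> \<le> x \<bullet> (X *v x)" for x
  proof -
    define w where "w = matrix_inv X *v (Y *v x)"
    have 1: "X *v w = Y *v x" and 2: "x \<bullet> ((Y ** matrix_inv X ** Y) *v x) = w \<bullet> (X *v w)"
      using key[OF X Y, of x] unfolding w_def by auto
    have 3: "0 \<le> x \<bullet> ((X - Y ** matrix_inv X ** Y) *v x)"
      using S unfolding pd_def by (metis inner_zero_left order_refl order_less_imp_le)
    have 4: "0 \<le> x \<bullet> (X *v x) - w \<bullet> (X *v w)"
      using 3 2 by (simp add: matrix_vector_mult_diff_rdistrib inner_diff_right)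
    have 5: "0 \<le> (x - w) \<bullet> (X *v (x - w))" "0 \<le> (x + w) \<bullet> (X *v (x + w))"
      using psdX unfolding psd_def by auto
    have 6: "x \<bullet> (X *v w) = x \<bullet> (Y *v x)" using 1 by simp
    show ?thesis using 4 5 quad_add[OF sX, of x w] quad_diff[OF sX, of x w] 6 by linarith
  qed
  have i1: "0 \<le> x \<bullet> (Y *v x) + x \<bullet> (X *v x)" "0 \<le> x \<bullet> (X *v x) - x \<bullet> (Y *v x)" for x
    using ineq[of x] by (auto simp: abs_le_iff)
  have "psd (Y - - X)"
    unfolding psd_def using Y sX i1
    by (auto simp: symmetric_mat_def transpose_add' matrix_vector_mult_add_rdistrib inner_add_right abs_le_iff)
  moreover have "psd (X - Y)"
    unfolding psd_def using Y sX i1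
    by (auto simp: symmetric_mat_def transpose_diff' matrix_vector_mult_diff_rdistrib inner_diff_right abs_le_iff)
  ultimately show ?thesis using psdX Y unfolding loewner_le_def by auto
qed


lemma backward:
  assumes X: "pd (X::real^'n^'n)" and Y: "symmetric_mat Y"
    and P: "pd (X + Y)" and M: "pd (X - Y)"
  shows "pd (X - Y ** matrix_inv X ** Y)"
proof -
  have sX: "symmetric_mat X" using X pd_def by blast
  have sP: "symmetric_mat (X + Y)" and sM: "symmetric_mat (X - Y)" using P M pd_def by auto
  have inv: "invertible X" using pd_invertible X by blast
  have pos: "0 < x \<bullet> ((X - Y ** matrix_inv X ** Y) *v x)" if "x \<noteq> 0" for x
  proof -
    define w where "w = matrix_inv X *v (Y *v x)"
    have 1: "X *v w = Y *v x" and 2: "x \<bullet> ((Y ** matrix_inv X ** Y) *v x) = w \<bullet> (X *v w)"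
      using key[OF X Y, of x] unfolding w_def by auto
    have t: "x \<bullet> ((X - Y ** matrix_inv X ** Y) *v x) = x \<bullet> (X *v x) - w \<bullet> (X *v w)"
      using 2 by (simp add: matrix_vector_mult_diff_rdistrib inner_diff_right)
    have a: "0 \<le> (x + w) \<bullet> ((X - Y) *v (x + w))" "0 \<le> (x - w) \<bullet> ((X + Y) *v (x - w))"
      using P M unfolding pd_def by (metis inner_zero_left order_refl order_less_imp_le)+
    have b: "0 < (x + w) \<bullet> ((X - Y) *v (x + w)) \<or> 0 < (x - w) \<bullet> ((X + Y) *v (x - w))"
    proof (cases "x + w = 0")
      case True
      have "(x + w) + (x - w) = 2 *\<^sub>R x" by (simp add: scaleR_2 algebra_simps)
      then have "x - w \<noteq> 0" using that True by auto
      then show ?thesis using P unfolding pd_def by blast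
    next
      case False
      then show ?thesis using M unfolding pd_def by blast
    qed
    have qa: "(x + w) \<bullet> ((X - Y) *v (x + w)) = x \<bullet> ((X - Y) *v x) + 2 * (x \<bullet> ((X - Y) *v w)) + w \<bullet> ((X - Y) *v w)"
      by (rule quad_add[OF sM])
    have qb: "(x - w) \<bullet> ((X + Y) *v (x - w)) = x \<bullet> ((X + Y) *v x) - 2 * (x \<bullet> ((X + Y) *v w)) + w \<bullet> ((X + Y) *v w)"
      by (rule quad_diff[OF sP])
    have 3: "x \<bullet> (Y *v w) = w \<bullet> (X *v w)"
      using sym_swap[OF Y, of x w] 1 by simp
    have "0 < x \<bullet> (X *v x) - w \<bullet> (X *v w)"
    proof -
      have e1: "x \<bullet> ((X - Y) *v x) = x \<bullet> (X *v x) - x \<bullet> (Y *v x)"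
        "x \<bullet> ((X - Y) *v w) = x \<bullet> (X *v w) - x \<bullet> (Y *v w)"
        "w \<bullet> ((X - Y) *v w) = w \<bullet> (X *v w) - w \<bullet> (Y *v w)"
        "x \<bullet> ((X + Y) *v x) = x \<bullet> (X *v x) + x \<bullet> (Y *v x)"
        "x \<bullet> ((X + Y) *v w) = x \<bullet> (X *v w) + x \<bullet> (Y *v w)"
        "w \<bullet> ((X + Y) *v w) = w \<bullet> (X *v w) + w \<bullet> (Y *v w)"
        by (simp_all add: matrix_vector_mult_diff_rdistrib matrix_vector_mult_add_rdistrib inner_diff_right inner_add_right)
      show ?thesis using a b qa qb 3 e1 by linarith
    qed
    then show ?thesis using t by simp
  qed
  show ?thesis unfolding pd_def using sym_schur[OF sX Y inv] pos by blast
qed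


lemma c1: "continuous_on UNIV (\<lambda>A::real^'n^'n. A *v x)"
proof -
  have "linear (\<lambda>A::real^'n^'n. A *v x)"
    by (rule linearI) (simp_all add: matrix_vector_mult_add_rdistrib scaleR_matrix_vector_assoc)
  then show ?thesis by (simp add: linear_continuous_on linear_conv_bounded_linear)
qed

lemma c2: "continuous_on UNIV (transpose :: real^'n^'n \<Rightarrow> _)"
proof -
  have "linear (transpose :: real^'n^'n \<Rightarrow> _)"
    by (rule linearI) (simp_all add: transpose_def vec_eq_iff)
  then show ?thesis by (simp add: linear_continuous_on linear_conv_bounded_linear)
qed

lemma psd_shift:
  assumes "psd (A::real^'n^'n)" "0 < e"
  shows "pd (A + e *\<^sub>R mat 1)"
proof -
  have s: "symmetric_mat (A + e *\<^sub>R mat 1)"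
    using assms(1) by (simp add: psd_def symmetric_mat_def transpose_add' transpose_scalar)
  have "0 < x \<bullet> ((A + e *\<^sub>R mat 1) *v x)" if "x \<noteq> 0" for x
  proof -
    have "(e *\<^sub>R mat 1) *v x = e *\<^sub>R x"
      by (metis scaleR_matrix_vector_assoc matrix_vector_mul_lid)
    then have "x \<bullet> ((A + e *\<^sub>R mat 1) *v x) = x \<bullet> (A *v x) + e * (x \<bullet> x)"
      by (simp add: matrix_vector_mult_add_rdistrib inner_add_right)
    moreover have "0 < x \<bullet> x" using that by simp
    moreover have "0 \<le> x \<bullet> (A *v x)" using assms(1) psd_def by blast
    ultimately show ?thesis using assms(2) by (simp add: add_nonneg_pos)
  qed
  then show ?thesis using s pd_def by blast
qed

theorem lemma2:
  shows "{(X :: real^'n^'n, Y :: real^'n^'n).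
            psd X \<and> symmetric_mat Y \<and> loewner_le (- X) Y \<and> loewner_le Y X}
       = closure {(X :: real^'n^'n, Y :: real^'n^'n).
            pd X \<and> symmetric_mat Y \<and> pd (X - Y ** matrix_inv X ** Y)}"
    (is "?S = closure ?T")
proof
  have TS: "?T \<subseteq> ?S" using forward by auto
  have eq: "?S = (\<Inter>x. {p. 0 \<le> x \<bullet> (fst p *v x)} \<inter> {p. 0 \<le> x \<bullet> ((snd p + fst p) *v x)}
        \<inter> {p. 0 \<le> x \<bullet> ((fst p - snd p) *v x)}) \<inter> {p. transpose (fst p) = fst p}
        \<inter> {p. transpose (snd p) = snd p}"
    by (auto simp: psd_def loewner_le_def symmetric_mat_def transpose_add' transpose_diff')
  have "closed ?S" unfolding eq
    by (intro closed_Int closed_INT ballI closed_Collect_le closed_Collect_eq continuous_intros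
        continuous_on_compose2[OF c1] continuous_on_compose2[OF c2]) auto
  then show "closure ?T \<subseteq> ?S" using TS closure_minimal by blast
next
  show "?S \<subseteq> closure ?T"
  proof
    fix p assume "p \<in> ?S"
    then obtain X Y where p: "p = (X, Y)" and X: "psd X" and Y: "symmetric_mat Y"
      and P: "psd (Y - - X)" and M: "psd (X - Y)"
      unfolding loewner_le_def by auto
    define f where "f n = (X + inverse (real (Suc n)) *\<^sub>R mat 1, Y)" for n
    have "f n \<in> ?T" for n
    proof -
      let ?e = "inverse (real (Suc n))"
      have e: "0 < ?e" by simp
      have X': "pd (X + ?e *\<^sub>R mat 1)" by (rule psd_shift[OF X e])
      have "pd ((Y - - X) + ?e *\<^sub>R mat 1)" by (rule psd_shift[OF P e])
      moreover have "(Y - - X) + ?e *\<^sub>R mat 1 = (X + ?e *\<^sub>R mat 1) + Y" by (simp add: algebra_simps)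
      ultimately have P': "pd ((X + ?e *\<^sub>R mat 1) + Y)" by metis
      have "pd ((X - Y) + ?e *\<^sub>R mat 1)" by (rule psd_shift[OF M e])
      moreover have "(X - Y) + ?e *\<^sub>R mat 1 = (X + ?e *\<^sub>R mat 1) - Y" by (simp add: algebra_simps)
      ultimately have M': "pd ((X + ?e *\<^sub>R mat 1) - Y)" by metis
      show ?thesis unfolding f_def using backward[OF X' Y P' M'] X' Y by auto
    qed
    moreover have "f \<longlonglongrightarrow> p"
    proof -
      have "(\<lambda>n. inverse (real (Suc n)) *\<^sub>R (mat 1 :: real^'n^'n)) \<longlonglongrightarrow> 0 *\<^sub>R mat 1"
        by (intro tendsto_scaleR LIMSEQ_inverse_real_of_nat tendsto_const)
      then have "(\<lambda>n. X + inverse (real (Suc n)) *\<^sub>R (mat 1 :: real^'n^'n)) \<longlonglongrightarrow> X + 0"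
        by (intro tendsto_add tendsto_const) simp
      then show ?thesis unfolding f_def p by (intro tendsto_Pair tendsto_const) simp
    qed
    ultimately show "p \<in> closure ?T" unfolding closure_sequential by blast
  qed
qed

end
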